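(* Let $A$ be an $r\times r$ submatrix of a real symmetric $n\times n$ matrix. If one row of $A$ is a tropical multiple of another row of $A$, then $A$ is symmetrically tropically singular. The same holds if one column of $A$ is a tropical multiple of another column of $A$.
   Context: A row (or column) vector $u$ is a tropical multiple of $v$ if there is $c\in\mathbb R$ with $u_k=c+v_k$ for all $k$. For an $r\times r$ submatrix of a real symmetric matrix with row index set $I$ and column index set $J$, each bijection $\rho:I\to J$ gives a monomial $\prod_{i\in I}X_{i,\rho(i)}$ in commuting variables subject to the identification $X_{i,j}=X_{j,i}$, with value $\sum_{i\in I}A_{i,\rho(i)}$; the submatrix is symmetrically tropically singular if the minimum value is attained by at least two distinct monomials (distinct after the identification). *)

theory Defs
  imports Complex_Main "HOL-Library.Multiset"
begin

text \<open>A real n x n matrix is represented as a function nat => nat => real, indices in {0..<n}.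
  An r x r submatrix is given by a row index set I and a column index set J, both subsets
  of {0..<n} of cardinality r.\<close>

definition symmetric_matrix :: "nat \<Rightarrow> (nat \<Rightarrow> nat \<Rightarrow> real) \<Rightarrow> bool" where
  "symmetric_matrix n M \<longleftrightarrow> (\<forall>i<n. \<forall>j<n. M i j = M j i)"

definition trop_multiple_row :: "(nat \<Rightarrow> nat \<Rightarrow> real) \<Rightarrow> nat set \<Rightarrow> nat \<Rightarrow> nat \<Rightarrow> bool" where
  "trop_multiple_row M J i i' \<longleftrightarrow> (\<exists>c::real. \<forall>k\<in>J. M i k = c + M i' k)"

definition trop_multiple_col :: "(nat \<Rightarrow> nat \<Rightarrow> real) \<Rightarrow> nat set \<Rightarrow> nat \<Rightarrow> nat \<Rightarrow> bool" where
  "trop_multiple_col M I j j' \<longleftrightarrow> (\<exists>c::real. \<forall>k\<in>I. M k j = c + M k j')"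

text \<open>The monomial of a bijection rho : I -> J: the multiset of unordered index pairs
  {i, rho i}, i in I (this encodes the identification X_ij = X_ji).\<close>
definition sym_monomial :: "nat set \<Rightarrow> (nat \<Rightarrow> nat) \<Rightarrow> nat set multiset" where
  "sym_monomial I \<rho> = image_mset (\<lambda>i. {i, \<rho> i}) (mset_set I)"

definition trop_value :: "(nat \<Rightarrow> nat \<Rightarrow> real) \<Rightarrow> nat set \<Rightarrow> (nat \<Rightarrow> nat) \<Rightarrow> real" where
  "trop_value M I \<rho> = (\<Sum>i\<in>I. M i (\<rho> i))"

definition sym_trop_singular :: "(nat \<Rightarrow> nat \<Rightarrow> real) \<Rightarrow> nat set \<Rightarrow> nat set \<Rightarrow> bool" where
  "sym_trop_singular M I J \<longleftrightarrow>
     (\<exists>\<rho>1 \<rho>2. bij_betw \<rho>1 I J \<and> bij_betw \<rho>2 I J \<and>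
        sym_monomial I \<rho>1 \<noteq> sym_monomial I \<rho>2 \<and>
        (\<forall>\<rho>. bij_betw \<rho> I J \<longrightarrow> trop_value M I \<rho>1 \<le> trop_value M I \<rho>) \<and>
        trop_value M I \<rho>2 = trop_value M I \<rho>1)"

end

theory Submission
  imports Defs "HOL-Library.FuncSet"
begin

lemma swap_bij:
  assumes "bij_betw \<rho> I J" "a \<in> I" "b \<in> I" "a \<noteq> b"
  shows "bij_betw (\<rho>(a := \<rho> b, b := \<rho> a)) I J"
proof -
  have e: "\<rho>(a := \<rho> b, b := \<rho> a) = \<rho> \<circ> (id(a := b, b := a))" by auto
  have "bij_betw (id(a := b, b := a)) I I"
    by (rule bij_betw_byWitness[where f'="id(a := b, b := a)"]) (use assms(2-4) in auto)
  then show ?thesis unfolding e using assms(1) bij_betw_trans by blast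
qed

lemma swap_value:
  assumes "finite I" "a \<in> I" "b \<in> I" "a \<noteq> b"
  shows "trop_value M I (\<rho>(a := \<rho> b, b := \<rho> a)) =
    trop_value M I \<rho> - M a (\<rho> a) - M b (\<rho> b) + M a (\<rho> b) + M b (\<rho> a)"
proof -
  let ?s = "\<rho>(a := \<rho> b, b := \<rho> a)"
  have I: "I = insert a (insert b (I - {a,b}))" using assms by auto
  have f: "finite (I - {a,b})" using assms by auto
  have c: "(\<Sum>i\<in>I-{a,b}. M i (?s i)) = (\<Sum>i\<in>I-{a,b}. M i (\<rho> i))"
    by (rule sum.cong) auto
  have "trop_value M I ?s = M a (?s a) + M b (?s b) + (\<Sum>i\<in>I-{a,b}. M i (?s i))"
    unfolding trop_value_def by (subst I, subst sum.insert) (use f assms in auto)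
  moreover have "trop_value M I \<rho> = M a (\<rho> a) + M b (\<rho> b) + (\<Sum>i\<in>I-{a,b}. M i (\<rho> i))"
    unfolding trop_value_def by (subst I, subst sum.insert) (use f assms in auto)
  ultimately show ?thesis using c assms(4) by simp
qed

lemma two_eq: assumes h: "{#x, y#} = {#z, w#}" shows "(x = z \<and> y = w) \<or> (x = w \<and> y = z)"
proof -
  have "x \<in># {#z, w#}" using h by (metis union_single_eq_member)
  hence "x = z \<or> x = w" by auto
  thus ?thesis
  proof
    assume "x = z" thus ?thesis using h by simp
  next
    assume "x = w" hence "{#x, y#} = {#x, z#}" using h by (simp add: add_mset_commute)
    thus ?thesis using \<open>x = w\<close> by simp
  qed
qed


lemma swap_monomial:
  assumes "finite I" "a \<in> I" "b \<in> I" "a \<noteq> b" "\<rho> a \<noteq> \<rho> b"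
  shows "sym_monomial I (\<rho>(a := \<rho> b, b := \<rho> a)) \<noteq> sym_monomial I \<rho>"
proof
  let ?s = "\<rho>(a := \<rho> b, b := \<rho> a)"
  assume h: "sym_monomial I ?s = sym_monomial I \<rho>"
  have I: "mset_set I = mset_set (I - {a,b}) + {#a, b#}"
  proof -
    have "mset_set I = add_mset a (mset_set (I - {a}))" using assms by (simp add: mset_set.remove)
    also have "mset_set (I - {a}) = add_mset b (mset_set (I - {a} - {b}))"
      using assms by (simp add: mset_set.remove)
    finally show ?thesis by (simp add: Diff_insert2[symmetric] insert_commute)
  qed
  have c: "image_mset (\<lambda>i. {i, ?s i}) (mset_set (I - {a,b})) = image_mset (\<lambda>i. {i, \<rho> i}) (mset_set (I - {a,b}))"
    by (rule image_mset_cong) (use assms in auto)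
  from h have "{#{a, \<rho> b}, {b, \<rho> a}#} = {#{a, \<rho> a}, {b, \<rho> b}#}"
    unfolding sym_monomial_def I using c assms(4) by (simp add: add_mset_commute)
  from two_eq[OF this] show False using assms(4,5) by (auto simp: doubleton_eq_iff)
qed

lemma min_exists:
  assumes "finite I" "finite J" "card I = card J"
  shows "\<exists>\<rho>. bij_betw \<rho> I J \<and> (\<forall>\<sigma>. bij_betw \<sigma> I J \<longrightarrow> trop_value M I \<rho> \<le> trop_value M I \<sigma>)"
proof -
  let ?V = "{trop_value M I \<rho> | \<rho>. bij_betw \<rho> I J}"
  have "?V \<subseteq> trop_value M I ` (PiE I (\<lambda>_. J))"
  proof
    fix v assume "v \<in> ?V"
    then obtain \<rho> where r: "bij_betw \<rho> I J" "v = trop_value M I \<rho>" by blast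
    have "v = trop_value M I (restrict \<rho> I)" unfolding r trop_value_def
      by (rule sum.cong) auto
    moreover have "restrict \<rho> I \<in> PiE I (\<lambda>_. J)" using r(1) by (auto simp: bij_betw_def Pi_iff)
    ultimately show "v \<in> trop_value M I ` (PiE I (\<lambda>_. J))" by blast
  qed
  moreover have "finite (trop_value M I ` (PiE I (\<lambda>_. J)))"
    by (rule finite_imageI, rule finite_PiE) (use assms in auto)
  ultimately have fin: "finite ?V" by (rule finite_subset)
  obtain \<rho>0 where "bij_betw \<rho>0 I J" using assms finite_same_card_bij by blast
  hence ne: "?V \<noteq> {}" by blast
  have "Min ?V \<in> ?V" using Min_in[OF fin ne] .
  then obtain \<rho> where r: "bij_betw \<rho> I J" "Min ?V = trop_value M I \<rho>" by auto
  show ?thesis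
  proof (rule exI[of _ \<rho>], intro conjI allI impI)
    fix \<sigma> assume "bij_betw \<sigma> I J"
    hence "trop_value M I \<sigma> \<in> ?V" by blast
    thus "trop_value M I \<rho> \<le> trop_value M I \<sigma>" using Min_le[OF fin] r(2) by simp
  qed (rule r(1))
qed

lemma key:
  assumes "finite I" "bij_betw \<rho> I J"
    "\<forall>\<sigma>. bij_betw \<sigma> I J \<longrightarrow> trop_value M I \<rho> \<le> trop_value M I \<sigma>"
    "a \<in> I" "b \<in> I" "a \<noteq> b"
    "M a (\<rho> b) + M b (\<rho> a) = M a (\<rho> a) + M b (\<rho> b)"
  shows "sym_trop_singular M I J"
  unfolding sym_trop_singular_def
proof (intro exI conjI)
  show "bij_betw \<rho> I J" by fact
  show "bij_betw (\<rho>(a := \<rho> b, b := \<rho> a)) I J" using swap_bij assms by metis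
  have "\<rho> a \<noteq> \<rho> b" using assms(2,4,5,6) by (metis bij_betw_iff_bijections)
  thus "sym_monomial I \<rho> \<noteq> sym_monomial I (\<rho>(a := \<rho> b, b := \<rho> a))"
    using swap_monomial assms by metis
  show "\<forall>\<sigma>. bij_betw \<sigma> I J \<longrightarrow> trop_value M I \<rho> \<le> trop_value M I \<sigma>" by fact
  show "trop_value M I (\<rho>(a := \<rho> b, b := \<rho> a)) = trop_value M I \<rho>"
    using swap_value[OF assms(1,4,5,6)] assms(7) by simp
qed

theorem proposition4:
  fixes n r :: nat and M :: "nat \<Rightarrow> nat \<Rightarrow> real" and I J :: "nat set"
  assumes "symmetric_matrix n M"
    and "I \<subseteq> {0..<n}" and "J \<subseteq> {0..<n}" and "card I = r" and "card J = r"
    and "(\<exists>i\<in>I. \<exists>i'\<in>I. i \<noteq> i' \<and> trop_multiple_row M J i i')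
         \<or> (\<exists>j\<in>J. \<exists>j'\<in>J. j \<noteq> j' \<and> trop_multiple_col M I j j')"
  shows "sym_trop_singular M I J"
proof -
  have fI: "finite I" and fJ: "finite J" using assms(2,3) finite_subset by blast+
  obtain \<rho> where r: "bij_betw \<rho> I J"
    "\<forall>\<sigma>. bij_betw \<sigma> I J \<longrightarrow> trop_value M I \<rho> \<le> trop_value M I \<sigma>"
    using min_exists[OF fI fJ] assms(4,5) by metis
  from assms(6) show ?thesis
  proof
    assume "\<exists>i\<in>I. \<exists>i'\<in>I. i \<noteq> i' \<and> trop_multiple_row M J i i'"
    then obtain i i' c where h: "i \<in> I" "i' \<in> I" "i \<noteq> i'" "\<forall>k\<in>J. M i k = c + M i' k"
      unfolding trop_multiple_row_def by blast
    have "\<rho> i \<in> J" "\<rho> i' \<in> J" using r(1) h by (auto simp: bij_betw_def)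
    hence "M i (\<rho> i') + M i' (\<rho> i) = M i (\<rho> i) + M i' (\<rho> i')" using h(4) by simp
    thus ?thesis using key[OF fI r h(1,2,3)] by blast
  next
    assume "\<exists>j\<in>J. \<exists>j'\<in>J. j \<noteq> j' \<and> trop_multiple_col M I j j'"
    then obtain j j' c where h: "j \<in> J" "j' \<in> J" "j \<noteq> j'" "\<forall>k\<in>I. M k j = c + M k j'"
      unfolding trop_multiple_col_def by blast
    define a where "a = inv_into I \<rho> j"
    define b where "b = inv_into I \<rho> j'"
    have ab: "a \<in> I" "b \<in> I" "\<rho> a = j" "\<rho> b = j'" unfolding a_def b_def
      using r(1) h(1,2) by (auto simp: bij_betw_def inv_into_into f_inv_into_f)
    hence "a \<noteq> b" using h(3) by auto
    have "M a (\<rho> b) + M b (\<rho> a) = M a (\<rho> a) + M b (\<rho> b)" using ab h(4) by simp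
    thus ?thesis using key[OF fI r ab(1,2) \<open>a \<noteq> b\<close>] by blast
  qed
qed

end
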